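(* Let $m_1,m_2,m_3>0$ with $m_1+m_2+m_3=1$, and let $$\mathcal V=\{(m_1,m_2)\in(0,1)\times(0,1):\ m_1^2m_2^2+m_1^2m_3^2+m_2^2m_3^2-2m_1m_2m_3<0\},\qquad m_3=1-m_1-m_2 .$$ Then there exists an acute triangle fixed-point configuration of the masses $m_1,m_2,m_3$ only for mass triples with $(m_1,m_2)\in\mathcal V$ (and for every such triple one exists). Furthermore, such a configuration is unique.
   Context: Three masses $m_1,m_2,m_3$ are placed on the equator of the unit sphere $\mathbb S^2$ at longitudes $\varphi_1=0$, $\varphi_2=\alpha$, $\varphi_3=\alpha+\beta$, where $(\alpha,\beta)$ lies in $\mathcal U=\{0<\alpha<\pi,\ 0<\beta<\pi,\ \pi<\alpha+\beta<2\pi\}$; then the geodesic distances are $d_{12}=\alpha$, $d_{23}=\beta$, $d_{13}=2\pi-(\alpha+\beta)$ (these three points form an acute triangle in the plane). The force function is $V=\sum_{i<j}m_im_j\cot d_{ij}$ (with $d_{ij}=\arccos(\mathbf q_i\cdot\mathbf q_j)$ the geodesic distance on $\mathbb S^2$), and a fixed point is a configuration that is a critical point of $V$ on $\{(\mathbf q_1,\mathbf q_2,\mathbf q_3)\in(\mathbb S^2)^3: d_{ij}\notin\{0,\pi\}\}$. An acute triangle fixed-point configuration is such a configuration with $(\alpha,\beta)\in\mathcal U$ that is a fixed point; uniqueness refers to uniqueness of $(\alpha,\beta)\in\mathcal U$ (configurations are normalized by $\varphi_1=0<\varphi_2<\varphi_3<2\pi$, any other being obtained from such one by an isometry). *)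

theory Defs
  imports "HOL-Analysis.Analysis"
begin

definition S2 :: "(real^3) set" where
  "S2 = sphere 0 1"

definition gdist :: "real^3 \<Rightarrow> real^3 \<Rightarrow> real" where
  "gdist p q = arccos (p \<bullet> q)"

definition Vforce :: "real \<Rightarrow> real \<Rightarrow> real \<Rightarrow> real^3 \<Rightarrow> real^3 \<Rightarrow> real^3 \<Rightarrow> real" where
  "Vforce m1 m2 m3 q1 q2 q3 =
     m1 * m2 * cot (gdist q1 q2) + m1 * m3 * cot (gdist q1 q3) + m2 * m3 * cot (gdist q2 q3)"

definition admissible :: "real^3 \<Rightarrow> real^3 \<Rightarrow> real^3 \<Rightarrow> bool" where
  "admissible q1 q2 q3 \<longleftrightarrow> q1 \<in> S2 \<and> q2 \<in> S2 \<and> q3 \<in> S2 \<and>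
     gdist q1 q2 \<notin> {0, pi} \<and> gdist q1 q3 \<notin> {0, pi} \<and> gdist q2 q3 \<notin> {0, pi}"

text \<open>Fixed point: critical point of V on the manifold of admissible configurations,
  i.e. the derivative of V along every differentiable curve in (S^2)^3 through the
  configuration vanishes.\<close>
definition fixed_point :: "real \<Rightarrow> real \<Rightarrow> real \<Rightarrow> real^3 \<Rightarrow> real^3 \<Rightarrow> real^3 \<Rightarrow> bool" where
  "fixed_point m1 m2 m3 q1 q2 q3 \<longleftrightarrow> admissible q1 q2 q3 \<and>
     (\<forall>g1 g2 g3 :: real \<Rightarrow> real^3.
        (\<forall>t. g1 t \<in> S2 \<and> g2 t \<in> S2 \<and> g3 t \<in> S2) \<and>
        g1 0 = q1 \<and> g2 0 = q2 \<and> g3 0 = q3 \<and>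
        g1 differentiable (at 0) \<and> g2 differentiable (at 0) \<and> g3 differentiable (at 0)
        \<longrightarrow> ((\<lambda>t. Vforce m1 m2 m3 (g1 t) (g2 t) (g3 t)) has_real_derivative 0) (at 0))"

definition equator_pt :: "real \<Rightarrow> real^3" where
  "equator_pt phi = vector [cos phi, sin phi, 0]"

definition acuteU :: "(real \<times> real) set" where
  "acuteU = {(a, b). 0 < a \<and> a < pi \<and> 0 < b \<and> b < pi \<and> pi < a + b \<and> a + b < 2 * pi}"

definition acute_fixed_point :: "real \<Rightarrow> real \<Rightarrow> real \<Rightarrow> real \<Rightarrow> real \<Rightarrow> bool" where
  "acute_fixed_point m1 m2 m3 a b \<longleftrightarrow> (a, b) \<in> acuteU \<and>
     fixed_point m1 m2 m3 (equator_pt 0) (equator_pt a) (equator_pt (a + b))"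

definition mass_region :: "(real \<times> real) set" where
  "mass_region = {(m1, m2). 0 < m1 \<and> m1 < 1 \<and> 0 < m2 \<and> m2 < 1 \<and>
     (let m3 = 1 - m1 - m2 in
       m1^2 * m2^2 + m1^2 * m3^2 + m2^2 * m3^2 - 2 * m1 * m2 * m3 < 0)}"

end

theory Submission
  imports Defs
begin



lemma inner_eq3: "(x::real^3) \<bullet> y = x$1*y$1 + x$2*y$2 + x$3*y$3"
  by (simp add: inner_vec_def sum_3)

lemma eq_pt_comp: "equator_pt x $ 1 = cos x" "equator_pt x $ 2 = sin x" "equator_pt x $ 3 = 0"
  by (simp_all add: equator_pt_def)

lemma eq_pt_inner: "equator_pt x \<bullet> equator_pt y = cos (x - y)"
  by (simp add: inner_eq3 eq_pt_comp cos_diff)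

lemma eq_pt_S2: "equator_pt x \<in> S2"
proof -
  have "norm (equator_pt x) ^ 2 = 1"
    by (simp add: power2_norm_eq_inner eq_pt_inner)
  then have "norm (equator_pt x) = 1"
    using norm_ge_zero[of "equator_pt x"] by (auto simp: power2_eq_1_iff)
  then show ?thesis by (simp add: S2_def)
qed

lemma v_inner_eq: "v \<bullet> equator_pt p = v$1 * cos p + v$2 * sin p"
  by (simp add: inner_eq3 eq_pt_comp)

lemma tangent_param:
  assumes "v \<bullet> equator_pt p = 0"
  shows "v \<bullet> equator_pt q = (v$2 * cos p - v$1 * sin p) * sin (q - p)"
proof -
  have h: "v$1 * cos p + v$2 * sin p = 0" using assms by (simp add: v_inner_eq)
  have s: "sin p ^2 + cos p ^2 = 1" by simp
  show ?thesis unfolding v_inner_eq sin_diff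
    using h s by algebra
qed

lemma equator_deriv: "(equator_pt has_vector_derivative vector [- sin x, cos x, 0]) (at x)"
proof -
  have e: "equator_pt = (\<lambda>x. cos x *\<^sub>R vector [1,0,0] + sin x *\<^sub>R vector [0,1,0])"
    by (auto simp: fun_eq_iff vec_eq_iff forall_3 equator_pt_def)
  have v: "vector [- sin x, cos x, 0] = (- sin x) *\<^sub>R (vector [1,0,0]::real^3) + cos x *\<^sub>R vector [0,1,0]"
    by (auto simp: vec_eq_iff forall_3)
  show ?thesis unfolding e v
    by (auto intro!: derivative_eq_intros)
qed

lemma tangent_orth:
  assumes S: "\<And>t. g t \<in> S2" and d: "(g has_vector_derivative v) (at 0)"
  shows "g 0 \<bullet> v = 0"
proof -
  have "((\<lambda>t. g t \<bullet> g t) has_derivative (\<lambda>h. g 0 \<bullet> (h *\<^sub>R v) + (h *\<^sub>R v) \<bullet> g 0)) (at 0)"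
    using d unfolding has_vector_derivative_def by (intro has_derivative_inner) auto
  moreover have "(\<lambda>t. g t \<bullet> g t) = (\<lambda>t. 1)"
    using S by (auto simp: S2_def fun_eq_iff dot_square_norm)
  ultimately have "((\<lambda>t. 1::real) has_derivative (\<lambda>h. 2 * h * (g 0 \<bullet> v))) (at 0)"
    by (simp add: inner_commute algebra_simps)
  moreover have "((\<lambda>t. 1::real) has_derivative (\<lambda>h. 0)) (at 0)" by simp
  ultimately have "(\<lambda>h::real. 2 * h * (g 0 \<bullet> v)) = (\<lambda>h. 0)"
    using has_derivative_unique by blast
  then show ?thesis by (metis mult_1 mult_cancel_right1 mult_eq_0_iff zero_neq_numeral)
qed




lemma inner_curve_deriv:
  assumes "(f has_vector_derivative u) (at 0)" "(g has_vector_derivative w) (at 0)"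
  shows "((\<lambda>t. f t \<bullet> g t) has_real_derivative (f 0 \<bullet> w + u \<bullet> g 0)) (at 0)"
proof -
  have "((\<lambda>t. f t \<bullet> g t) has_derivative (\<lambda>h. f 0 \<bullet> (h *\<^sub>R w) + (h *\<^sub>R u) \<bullet> g 0)) (at 0)"
    using assms unfolding has_vector_derivative_def by (intro has_derivative_inner) auto
  then show ?thesis unfolding has_field_derivative_def
    by (rule has_derivative_eq_rhs) (auto simp: fun_eq_iff algebra_simps)
qed

lemma cot_arccos_deriv:
  assumes d: "(h has_real_derivative h') (at 0)" and b: "-1 < h 0" "h 0 < 1"
  shows "((\<lambda>t. cot (arccos (h t))) has_real_derivative (h' / sin (arccos (h 0)) ^ 3)) (at 0)"
proof -
  let ?y = "arccos (h 0)"
  have s: "sin ?y = sqrt (1 - (h 0)^2)" using b by (simp add: sin_arccos)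
  have sp: "sin ?y > 0" using b arccos_lt_bounded[of "h 0"] by (simp add: sin_gt_zero)
  have d1: "((\<lambda>t. arccos (h t)) has_real_derivative (inverse (- sqrt (1 - (h 0)^2)) * h')) (at 0)"
    using DERIV_chain2[OF DERIV_arccos[OF b] d] .
  have d2: "((\<lambda>t. cot (arccos (h t))) has_real_derivative (- inverse ((sin ?y)\<^sup>2) * (inverse (- sqrt (1 - (h 0)^2)) * h'))) (at 0)"
    using DERIV_chain2[OF DERIV_cot d1] sp by simp
  have "- inverse ((sin ?y)\<^sup>2) * (inverse (- sqrt (1 - (h 0)^2)) * h') = h' / sin ?y ^ 3"
    unfolding s[symmetric] using sp by (simp add: field_simps power2_eq_square power3_eq_cube)
  with d2 show ?thesis by simp
qed

lemma V_deriv: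
  assumes d1: "(g1 has_vector_derivative v1) (at 0)"
    and d2: "(g2 has_vector_derivative v2) (at 0)"
    and d3: "(g3 has_vector_derivative v3) (at 0)"
    and b12: "\<bar>g1 0 \<bullet> g2 0\<bar> < 1" and b13: "\<bar>g1 0 \<bullet> g3 0\<bar> < 1" and b23: "\<bar>g2 0 \<bullet> g3 0\<bar> < 1"
  shows "((\<lambda>t. Vforce m1 m2 m3 (g1 t) (g2 t) (g3 t)) has_real_derivative
     (m1 * m2 * ((g1 0 \<bullet> v2 + v1 \<bullet> g2 0) / sin (gdist (g1 0) (g2 0)) ^ 3)
    + m1 * m3 * ((g1 0 \<bullet> v3 + v1 \<bullet> g3 0) / sin (gdist (g1 0) (g3 0)) ^ 3)
    + m2 * m3 * ((g2 0 \<bullet> v3 + v2 \<bullet> g3 0) / sin (gdist (g2 0) (g3 0)) ^ 3))) (at 0)"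
proof -
  have a: "((\<lambda>t. cot (arccos (g1 t \<bullet> g2 t))) has_real_derivative ((g1 0 \<bullet> v2 + v1 \<bullet> g2 0) / sin (gdist (g1 0) (g2 0)) ^ 3)) (at 0)"
    unfolding gdist_def using b12 by (intro cot_arccos_deriv inner_curve_deriv d1 d2) auto
  have b: "((\<lambda>t. cot (arccos (g1 t \<bullet> g3 t))) has_real_derivative ((g1 0 \<bullet> v3 + v1 \<bullet> g3 0) / sin (gdist (g1 0) (g3 0)) ^ 3)) (at 0)"
    unfolding gdist_def using b13 by (intro cot_arccos_deriv inner_curve_deriv d1 d3) auto
  have c: "((\<lambda>t. cot (arccos (g2 t \<bullet> g3 t))) has_real_derivative ((g2 0 \<bullet> v3 + v2 \<bullet> g3 0) / sin (gdist (g2 0) (g3 0)) ^ 3)) (at 0)"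
    unfolding gdist_def using b23 by (intro cot_arccos_deriv inner_curve_deriv d2 d3) auto
  show ?thesis unfolding Vforce_def gdist_def[symmetric]
    unfolding gdist_def
    by (intro DERIV_add DERIV_cmult a[unfolded gdist_def] b[unfolded gdist_def] c[unfolded gdist_def])
qed




lemma equator_shift: "((\<lambda>t. equator_pt (c + t)) has_vector_derivative vector [- sin c, cos c, 0]) (at 0)"
proof -
  have e: "(\<lambda>t. equator_pt (c + t)) = (\<lambda>t. cos (c + t) *\<^sub>R vector [1,0,0] + sin (c + t) *\<^sub>R vector [0,1,0])"
    by (auto simp: fun_eq_iff vec_eq_iff forall_3 equator_pt_def)
  have v: "vector [- sin c, cos c, 0] = (- sin (c + 0)) *\<^sub>R (vector [1,0,0]::real^3) + cos (c + 0) *\<^sub>R vector [0,1,0]"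
    by (auto simp: vec_eq_iff forall_3)
  show ?thesis unfolding e v
    by (auto intro!: derivative_eq_intros)
qed

lemma eq_pt_inner0: "equator_pt 0 \<bullet> equator_pt y = cos y"
  by (simp add: inner_eq3 eq_pt_comp)

lemma tang_inner: "vector [- sin c, cos c, 0] \<bullet> equator_pt p = sin (p - c)"
  "equator_pt p \<bullet> vector [- sin c, cos c, 0] = sin (p - c)"
  "vector [0, 1, 0] \<bullet> equator_pt p = sin p"
  by (simp_all add: inner_eq3 eq_pt_comp sin_diff)

lemma inner_lt1: "0 < d \<Longrightarrow> d < pi \<Longrightarrow> \<bar>cos d\<bar> < 1"
proof -
  assume "0 < d" "d < pi"
  then have "sin d > 0" by (simp add: sin_gt_zero)
  then have "cos d ^ 2 < 1" using sin_squared_eq[of d] by (smt (verit) zero_less_power)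
  then show ?thesis by (simp add: abs_square_less_1)
qed

context
  fixes a b :: real
  assumes U: "(a, b) \<in> acuteU"
begin

lemma U': "0 < a" "a < pi" "0 < b" "b < pi" "pi < a + b" "a + b < 2 * pi"
  using U by (auto simp: acuteU_def)

lemma gd12: "gdist (equator_pt 0) (equator_pt a) = a"
  using U' by (simp add: gdist_def eq_pt_inner arccos_cos)
lemma gd23: "gdist (equator_pt a) (equator_pt (a + b)) = b"
  using U' by (simp add: gdist_def eq_pt_inner arccos_cos)
lemma gd13: "gdist (equator_pt 0) (equator_pt (a + b)) = 2 * pi - (a + b)"
proof -
  have c: "equator_pt 0 \<bullet> equator_pt (a+b) = cos (2*pi - (a+b))" by (simp add: eq_pt_inner0)
  show ?thesis unfolding gdist_def c using U' by (intro arccos_cos) auto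
qed

lemma sins: "sin a > 0" "sin b > 0" "sin (a + b) < 0"
  using U' by (auto simp: sin_gt_zero sin_lt_zero)

lemma sin13: "sin (2 * pi - (a + b)) = - sin (a + b)" "sin (pi * 2 - (a + b)) = - sin (a + b)" by (simp_all add: sin_diff)

lemma s13: "sin (gdist (equator_pt 0) (equator_pt (a + b))) = - sin (a + b)"
  unfolding gd13 by (simp add: sin_diff)

lemma admiss: "admissible (equator_pt 0) (equator_pt a) (equator_pt (a + b))"
  using U' by (auto simp: admissible_def eq_pt_S2 gd12 gd23 gd13)

lemma bnds: "\<bar>equator_pt 0 \<bullet> equator_pt a\<bar> < 1" "\<bar>equator_pt 0 \<bullet> equator_pt (a + b)\<bar> < 1"
   "\<bar>equator_pt a \<bullet> equator_pt (a + b)\<bar> < 1"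
proof -
  show "\<bar>equator_pt 0 \<bullet> equator_pt a\<bar> < 1" using inner_lt1[of a] U' by (simp add: eq_pt_inner)
  show "\<bar>equator_pt a \<bullet> equator_pt (a + b)\<bar> < 1" using inner_lt1[of b] U' by (simp add: eq_pt_inner)
  show "\<bar>equator_pt 0 \<bullet> equator_pt (a + b)\<bar> < 1" using inner_lt1[of "2*pi - (a+b)"] U'
    by (simp add: eq_pt_inner0)
qed

end

lemma alg_zero:
  fixes sA sB sC :: real
  assumes "sA > 0" "sB > 0" "sC < 0" "m3 > 0" "m1 > 0"
    and E: "m2 * sC^2 = m3 * sA^2" "m3 * sA^2 = m1 * sB^2"
  shows "m1*m2*((r1 - r2)* sA)/sA^3 + m1*m3*((r1-r3)* sC)/((-sC)^3) + m2*m3*((r2-r3)* sB)/sB^3 = 0"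
proof -
  have A: "sA^2 > 0" "sB^2 > 0" "sC^2 > 0" using assms by auto
  have 1: "1 / sC^2 = m2 / (m3 * sA^2)" using E A assms by (simp add: field_simps)
  have 2: "1 / sB^2 = m1 / (m3 * sA^2)" using E A assms by (simp add: field_simps)
  have "m1*m2*((r1 - r2)* sA)/sA^3 + m1*m3*((r1-r3)* sC)/((-sC)^3) + m2*m3*((r2-r3)* sB)/sB^3
     = m1*m2*(r1 - r2)/sA^2 - m1*m3*(r1-r3) * (1/sC^2) + m2*m3*(r2-r3)*(1/sB^2)"
    using assms by (simp add: power2_eq_square power3_eq_cube)
  also have "\<dots> = (m1*m2/sA^2) * ((r1-r2) - (r1-r3) + (r2-r3))" unfolding 1 2 using A \<open>m3 > 0\<close> by (simp add: field_simps)
  also have "\<dots> = 0" by simp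
  finally show ?thesis .
qed

lemma fp_D:
  assumes fp: "fixed_point m1 m2 m3 q1 q2 q3"
    and S: "\<And>t. g1 t \<in> S2 \<and> g2 t \<in> S2 \<and> g3 t \<in> S2"
    and i: "g1 0 = q1" "g2 0 = q2" "g3 0 = q3"
    and d1: "(g1 has_vector_derivative v1) (at 0)"
    and d2: "(g2 has_vector_derivative v2) (at 0)"
    and d3: "(g3 has_vector_derivative v3) (at 0)"
    and b12: "\<bar>q1 \<bullet> q2\<bar> < 1" and b13: "\<bar>q1 \<bullet> q3\<bar> < 1" and b23: "\<bar>q2 \<bullet> q3\<bar> < 1"
  shows "m1 * m2 * ((q1 \<bullet> v2 + v1 \<bullet> q2) / sin (gdist q1 q2) ^ 3)
    + m1 * m3 * ((q1 \<bullet> v3 + v1 \<bullet> q3) / sin (gdist q1 q3) ^ 3)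
    + m2 * m3 * ((q2 \<bullet> v3 + v2 \<bullet> q3) / sin (gdist q2 q3) ^ 3) = 0"
proof -
  have z: "((\<lambda>t. Vforce m1 m2 m3 (g1 t) (g2 t) (g3 t)) has_real_derivative 0) (at 0)"
  proof -
    have df: "g1 differentiable (at 0)" "g2 differentiable (at 0)" "g3 differentiable (at 0)"
      using d1 d2 d3 by (auto intro: differentiableI_vector)
    have "\<forall>t. g1 t \<in> S2 \<and> g2 t \<in> S2 \<and> g3 t \<in> S2" using S by blast
    then show ?thesis using fp df i unfolding fixed_point_def
      apply (elim conjE)
      apply (drule spec[of _ g1], drule spec[of _ g2], drule spec[of _ g3])
      by blast
  qed
  have D: "((\<lambda>t. Vforce m1 m2 m3 (g1 t) (g2 t) (g3 t)) has_real_derivative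
     (m1 * m2 * ((g1 0 \<bullet> v2 + v1 \<bullet> g2 0) / sin (gdist (g1 0) (g2 0)) ^ 3)
    + m1 * m3 * ((g1 0 \<bullet> v3 + v1 \<bullet> g3 0) / sin (gdist (g1 0) (g3 0)) ^ 3)
    + m2 * m3 * ((g2 0 \<bullet> v3 + v2 \<bullet> g3 0) / sin (gdist (g2 0) (g3 0)) ^ 3))) (at 0)"
    using b12 b13 b23 i by (intro V_deriv d1 d2 d3) auto
  show ?thesis using DERIV_unique[OF D z] i by simp
qed

context
  fixes a b :: real
  assumes U: "(a, b) \<in> acuteU"
begin

lemma fp_iff:
  assumes m: "0 < m1" "0 < m2" "0 < m3"
  shows "fixed_point m1 m2 m3 (equator_pt 0) (equator_pt a) (equator_pt (a + b)) \<longleftrightarrow>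
     (m2 * sin (a+b)^2 = m3 * sin a^2 \<and> m3 * sin a^2 = m1 * sin b^2 \<and> m1 * sin b^2 = m2 * sin (a+b)^2)"
    (is "?fp \<longleftrightarrow> ?E")
proof
  have sA: "sin a > 0" and sB: "sin b > 0" and sC: "sin (a+b) < 0" using sins[OF U] by auto
  assume fp: ?fp
  have dc: "((\<lambda>t. equator_pt c) has_vector_derivative 0) (at 0)" for c
    by (rule derivative_intros)
  have S: "\<And>t. equator_pt (f t) \<in> S2" for f by (rule eq_pt_S2)
  note B = bnds[OF U]
  have e1: "m1 * m2 * ((equator_pt 0 \<bullet> 0 + vector [- sin 0, cos 0, 0] \<bullet> equator_pt a) / sin a ^ 3)
    + m1 * m3 * ((equator_pt 0 \<bullet> 0 + vector [- sin 0, cos 0, 0] \<bullet> equator_pt (a+b)) / (- sin (a+b)) ^ 3)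
    + m2 * m3 * ((equator_pt a \<bullet> 0 + 0 \<bullet> equator_pt (a+b)) / sin b ^ 3) = 0"
    using fp_D[OF fp, of "\<lambda>t. equator_pt (0 + t)" "\<lambda>t. equator_pt a" "\<lambda>t. equator_pt (a+b)",
        OF _ _ _ _ equator_shift dc dc B] 
    by (simp add: eq_pt_S2 gd12[OF U] gd13[OF U] gd23[OF U] del: vector_3)
  have e2: "m1 * m2 * ((equator_pt 0 \<bullet> vector [- sin a, cos a, 0] + 0 \<bullet> equator_pt a) / sin a ^ 3)
    + m1 * m3 * ((equator_pt 0 \<bullet> 0 + 0 \<bullet> equator_pt (a+b)) / (- sin (a+b)) ^ 3)
    + m2 * m3 * ((equator_pt a \<bullet> 0 + vector [- sin a, cos a, 0] \<bullet> equator_pt (a+b)) / sin b ^ 3) = 0"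
    using fp_D[OF fp, of "\<lambda>t. equator_pt 0" "\<lambda>t. equator_pt (a + t)" "\<lambda>t. equator_pt (a+b)",
        OF _ _ _ _ dc equator_shift dc B] 
    by (simp add: eq_pt_S2 gd12[OF U] gd13[OF U] gd23[OF U] del: vector_3)
  have e3: "m1 * m2 * ((equator_pt 0 \<bullet> 0 + 0 \<bullet> equator_pt a) / sin a ^ 3)
    + m1 * m3 * ((equator_pt 0 \<bullet> vector [- sin (a+b), cos (a+b), 0] + 0 \<bullet> equator_pt (a+b)) / (- sin (a+b)) ^ 3)
    + m2 * m3 * ((equator_pt a \<bullet> vector [- sin (a+b), cos (a+b), 0] + 0 \<bullet> equator_pt (a+b)) / sin b ^ 3) = 0"
    using fp_D[OF fp, of "\<lambda>t. equator_pt 0" "\<lambda>t. equator_pt a" "\<lambda>t. equator_pt ((a+b) + t)",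
        OF _ _ _ _ dc dc equator_shift B] 
    by (simp add: eq_pt_S2 gd12[OF U] gd13[OF U] gd23[OF U] del: vector_3)
  have e1': "m1 * m2 / sin a ^ 2 - m1 * m3 / sin (a+b) ^ 2 = 0"
    using e1 sA sC by (simp add: tang_inner power2_eq_square power3_eq_cube)
  have e2': "m2 * m3 / sin b ^ 2 - m1 * m2 / sin a ^ 2 = 0"
    using e2 sA sB by (simp add: tang_inner power2_eq_square power3_eq_cube)
  have e3': "m1 * m3 / sin (a+b) ^ 2 - m2 * m3 / sin b ^ 2 = 0"
  proof -
    have n: "sin (- a - b) = - sin (a+b)" using sin_minus[of "a+b"] by (simp add: algebra_simps)
    show ?thesis using e3 sB sC by (simp add: n tang_inner power2_eq_square power3_eq_cube)
  qed
  show ?E using e1' e2' e3' m sA sB sC by (auto simp: field_simps)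
next
  assume E: ?E
  have sA: "sin a > 0" and sB: "sin b > 0" and sC: "sin (a+b) < 0" using sins[OF U] by auto
  note B = bnds[OF U]
  show ?fp unfolding fixed_point_def
  proof (intro conjI admiss[OF U] allI impI, elim conjE)
    fix g1 g2 g3 :: "real \<Rightarrow> real^3"
    assume S: "\<forall>t. g1 t \<in> S2 \<and> g2 t \<in> S2 \<and> g3 t \<in> S2"
      and i: "g1 0 = equator_pt 0" "g2 0 = equator_pt a" "g3 0 = equator_pt (a + b)"
      and df: "g1 differentiable at 0" "g2 differentiable at 0" "g3 differentiable at 0"
    define v1 where "v1 = vector_derivative g1 (at 0)"
    define v2 where "v2 = vector_derivative g2 (at 0)"
    define v3 where "v3 = vector_derivative g3 (at 0)"
    have d1: "(g1 has_vector_derivative v1) (at 0)" using df vector_derivative_works v1_def by blast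
    have d2: "(g2 has_vector_derivative v2) (at 0)" using df vector_derivative_works v2_def by blast
    have d3: "(g3 has_vector_derivative v3) (at 0)" using df vector_derivative_works v3_def by blast
    have o1: "v1 \<bullet> equator_pt 0 = 0" using tangent_orth[OF _ d1] S i by (simp add: inner_commute)
    have o2: "v2 \<bullet> equator_pt a = 0" using tangent_orth[OF _ d2] S i by (simp add: inner_commute)
    have o3: "v3 \<bullet> equator_pt (a+b) = 0" using tangent_orth[OF _ d3] S i by (simp add: inner_commute)
    define r1 where "r1 = v1$2 * cos 0 - v1$1 * sin 0"
    define r2 where "r2 = v2$2 * cos a - v2$1 * sin a"
    define r3 where "r3 = v3$2 * cos (a+b) - v3$1 * sin (a+b)"
    have p1: "\<And>q. v1 \<bullet> equator_pt q = r1 * sin (q - 0)" using tangent_param[OF o1] r1_def by simp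
    have p2: "\<And>q. v2 \<bullet> equator_pt q = r2 * sin (q - a)" using tangent_param[OF o2] r2_def by simp
    have p3: "\<And>q. v3 \<bullet> equator_pt q = r3 * sin (q - (a+b))" using tangent_param[OF o3] r3_def by simp
    have D: "((\<lambda>t. Vforce m1 m2 m3 (g1 t) (g2 t) (g3 t)) has_real_derivative
     (m1 * m2 * ((g1 0 \<bullet> v2 + v1 \<bullet> g2 0) / sin (gdist (g1 0) (g2 0)) ^ 3)
    + m1 * m3 * ((g1 0 \<bullet> v3 + v1 \<bullet> g3 0) / sin (gdist (g1 0) (g3 0)) ^ 3)
    + m2 * m3 * ((g2 0 \<bullet> v3 + v2 \<bullet> g3 0) / sin (gdist (g2 0) (g3 0)) ^ 3))) (at 0)"
      using B i by (intro V_deriv d1 d2 d3) auto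
    have h1: "g1 0 \<bullet> v2 = - r2 * sin a" using p2[of 0] i by (simp add: inner_commute)
    have h2: "v1 \<bullet> g2 0 = r1 * sin a" using p1[of a] i by simp
    have n: "sin (- a - b) = - sin (a+b)" using sin_minus[of "a+b"] by (simp add: algebra_simps)
    have h3: "g1 0 \<bullet> v3 = - r3 * sin (a+b)" using p3[of 0] i by (simp add: inner_commute n)
    have h4: "v1 \<bullet> g3 0 = r1 * sin (a+b)" using p1[of "a+b"] i by simp
    have h5: "g2 0 \<bullet> v3 = - r3 * sin b" using p3[of a] i by (simp add: inner_commute)
    have h6: "v2 \<bullet> g3 0 = r2 * sin b" using p2[of "a+b"] i by simp
    have "m1 * m2 * ((g1 0 \<bullet> v2 + v1 \<bullet> g2 0) / sin (gdist (g1 0) (g2 0)) ^ 3)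
    + m1 * m3 * ((g1 0 \<bullet> v3 + v1 \<bullet> g3 0) / sin (gdist (g1 0) (g3 0)) ^ 3)
    + m2 * m3 * ((g2 0 \<bullet> v3 + v2 \<bullet> g3 0) / sin (gdist (g2 0) (g3 0)) ^ 3)
     = m1*m2*((- r2 * sin a + r1 * sin a))/sin a^3 + m1*m3*((- r3 * sin (a+b) + r1 * sin (a+b)))/((-sin (a+b))^3) + m2*m3*((- r3 * sin b + r2 * sin b))/sin b^3"
      unfolding h1 h2 h3 h4 h5 h6 unfolding i gd12[OF U] s13[OF U] gd23[OF U] by simp
    also have "\<dots> = m1*m2*((r1 - r2) * sin a)/sin a^3 + m1*m3*((r1-r3) * sin (a+b))/((-sin (a+b))^3) + m2*m3*((r2-r3) * sin b)/sin b^3"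
      by (simp only: left_diff_distrib add.commute[of "- _"] diff_conv_add_uminus mult_minus_left distrib_right)
    also have "\<dots> = 0"
      by (rule alg_zero[OF sA sB sC m(3) m(1) conjunct1[OF E] conjunct1[OF conjunct2[OF E]]])
    finally show "((\<lambda>t. Vforce m1 m2 m3 (g1 t) (g2 t) (g3 t)) has_real_derivative 0) (at 0)"
      using D by simp
  qed
qed

end




lemma T1: fixes a b :: real shows "2 * (sin a^2 * sin b^2 + sin b^2 * sin (a+b)^2 + sin a^2 * sin (a+b)^2)
   - ((sin a^2)^2 + (sin b^2)^2 + (sin (a+b)^2)^2) = 4 * sin a^2 * sin b^2 * sin (a+b)^2"
proof -
  have x: "sin a^2 + cos a^2 = 1" "sin b^2 + cos b^2 = 1" by simp_all
  show ?thesis unfolding sin_add using x by algebra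
qed

lemma T2: fixes a b :: real shows "sin b^2 = sin (a+b)^2 + sin a^2 - 2 * sin (a+b) * sin a * cos b"
proof -
  have x: "sin a^2 + cos a^2 = 1" "sin b^2 + cos b^2 = 1" by simp_all
  show ?thesis unfolding sin_add using x by algebra
qed

lemma T3: fixes a b :: real shows "sin a^2 = sin b^2 + sin (a+b)^2 - 2 * sin b * sin (a+b) * cos a"
proof -
  have x: "sin a^2 + cos a^2 = 1" "sin b^2 + cos b^2 = 1" by simp_all
  show ?thesis unfolding sin_add using x by algebra
qed




lemma alg1:
  fixes m1 m2 m3 K A B C :: real
  assumes m: "m1 > 0" "m2 > 0" "m3 > 0" "m1 + m2 + m3 = 1" and K: "K > 0"
    and H: "2*(A*B+B*C+A*C) - (A^2+B^2+C^2) = 4*A*B*C"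
    and ABC: "A = K/m3" "B = K/m1" "C = K/m2"
  shows "K = (2*m1*m2*m3 - (m1^2*m2^2 + m1^2*m3^2 + m2^2*m3^2)) / (4*m1*m2*m3)"
proof -
  define P where "P = m1*m2*m3"
  have P: "P > 0" using m by (simp add: P_def)
  have 1: "P^2*(A*B) = K^2*m2*P" unfolding ABC P_def using m by (simp add: field_simps power2_eq_square)
  have 2: "P^2*(B*C) = K^2*m3*P" unfolding ABC P_def using m by (simp add: field_simps power2_eq_square)
  have 3: "P^2*(A*C) = K^2*m1*P" unfolding ABC P_def using m by (simp add: field_simps power2_eq_square)
  have 4: "P^2*A^2 = K^2*(m1^2*m2^2)" unfolding ABC P_def using m by (simp add: field_simps power2_eq_square)
  have 5: "P^2*B^2 = K^2*(m2^2*m3^2)" unfolding ABC P_def using m by (simp add: field_simps power2_eq_square)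
  have 6: "P^2*C^2 = K^2*(m1^2*m3^2)" unfolding ABC P_def using m by (simp add: field_simps power2_eq_square)
  have 7: "P^2*(A*B*C) = K^3*P" unfolding ABC P_def using m by (simp add: field_simps power2_eq_square power3_eq_cube)
  have "P^2 * (2*(A*B+B*C+A*C) - (A^2+B^2+C^2)) = P^2 * (4*A*B*C)" using H by simp
  then have "2*(P^2*(A*B)+P^2*(B*C)+P^2*(A*C)) - (P^2*A^2+P^2*B^2+P^2*C^2) = 4*(P^2*(A*B*C))"
    by (simp add: algebra_simps)
  then have "2*(K^2*m2*P+K^2*m3*P+K^2*m1*P) - (K^2*(m1^2*m2^2)+K^2*(m2^2*m3^2)+K^2*(m1^2*m3^2)) = 4*(K^3*P)"
    unfolding 1 2 3 4 5 6 7 .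
  then have "K^2 * (2*P*(m1+m2+m3) - (m1^2*m2^2 + m1^2*m3^2 + m2^2*m3^2)) = K^2 * (4*K*P)"
    by (simp add: algebra_simps power3_eq_cube power2_eq_square)
  then have "2*P*(m1+m2+m3) - (m1^2*m2^2 + m1^2*m3^2 + m2^2*m3^2) = 4*K*P"
    using K by simp
  then have "2*P - (m1^2*m2^2 + m1^2*m3^2 + m2^2*m3^2) = 4*K*P" using m(4) by simp
  then show ?thesis using m P unfolding P_def by (simp add: field_simps)
qed

lemma alg2:
  fixes m1 m2 m3 K A B C :: real
  assumes m: "m1 > 0" "m2 > 0" "m3 > 0" "m1 + m2 + m3 = 1"
    and K: "K = (2*m1*m2*m3 - (m1^2*m2^2 + m1^2*m3^2 + m2^2*m3^2)) / (4*m1*m2*m3)"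
    and ABC: "A = K/m3" "B = K/m1" "C = K/m2"
  shows "2*(A*B+B*C+A*C) - (A^2+B^2+C^2) = 4*A*B*C"
proof -
  define P where "P = m1*m2*m3"
  have P: "P > 0" using m by (simp add: P_def)
  have 1: "P^2*(A*B) = K^2*m2*P" unfolding ABC P_def using m by (simp add: field_simps power2_eq_square)
  have 2: "P^2*(B*C) = K^2*m3*P" unfolding ABC P_def using m by (simp add: field_simps power2_eq_square)
  have 3: "P^2*(A*C) = K^2*m1*P" unfolding ABC P_def using m by (simp add: field_simps power2_eq_square)
  have 4: "P^2*A^2 = K^2*(m1^2*m2^2)" unfolding ABC P_def using m by (simp add: field_simps power2_eq_square)
  have 5: "P^2*B^2 = K^2*(m2^2*m3^2)" unfolding ABC P_def using m by (simp add: field_simps power2_eq_square)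
  have 6: "P^2*C^2 = K^2*(m1^2*m3^2)" unfolding ABC P_def using m by (simp add: field_simps power2_eq_square)
  have 7: "P^2*(A*B*C) = K^3*P" unfolding ABC P_def using m by (simp add: field_simps power2_eq_square power3_eq_cube)
  have k: "2*P - (m1^2*m2^2 + m1^2*m3^2 + m2^2*m3^2) = 4*K*P" unfolding K P_def using m by (simp add: field_simps)
  have "2*(P^2*(A*B)+P^2*(B*C)+P^2*(A*C)) - (P^2*A^2+P^2*B^2+P^2*C^2) = 4*(P^2*(A*B*C))"
  proof -
    have "2*(K^2*m2*P+K^2*m3*P+K^2*m1*P) - (K^2*(m1^2*m2^2)+K^2*(m2^2*m3^2)+K^2*(m1^2*m3^2))
      = K^2 * (2*P*(m1+m2+m3) - (m1^2*m2^2 + m1^2*m3^2 + m2^2*m3^2))" by (simp add: algebra_simps)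
    also have "\<dots> = K^2 * (4*K*P)" using k m(4) by simp
    also have "\<dots> = 4*(K^3*P)" by (simp add: algebra_simps power3_eq_cube power2_eq_square)
    finally show ?thesis unfolding 1 2 3 4 5 6 7 .
  qed
  then have "P^2 * (2*(A*B+B*C+A*C) - (A^2+B^2+C^2)) = P^2 * (4*A*B*C)"
    by (simp add: algebra_simps)
  then show ?thesis using P by simp
qed




definition K0 :: "real \<Rightarrow> real \<Rightarrow> real \<Rightarrow> real" where
  "K0 m1 m2 m3 = (2*m1*m2*m3 - (m1^2*m2^2 + m1^2*m3^2 + m2^2*m3^2)) / (4*m1*m2*m3)"

definition "sA m1 m2 m3 = sqrt (K0 m1 m2 m3 / m3)"
definition "sB m1 m2 m3 = sqrt (K0 m1 m2 m3 / m1)"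
definition "sC m1 m2 m3 = sqrt (K0 m1 m2 m3 / m2)"
definition "cA m1 m2 m3 = (sB m1 m2 m3 ^2 + sC m1 m2 m3 ^2 - sA m1 m2 m3 ^2) / (- 2 * sB m1 m2 m3 * sC m1 m2 m3)"
definition "cB m1 m2 m3 = (sC m1 m2 m3 ^2 + sA m1 m2 m3 ^2 - sB m1 m2 m3 ^2) / (- 2 * sC m1 m2 m3 * sA m1 m2 m3)"

lemma nec:
  assumes m: "m1 > 0" "m2 > 0" "m3 > 0" "m1 + m2 + m3 = 1" and U: "(a, b) \<in> acuteU"
    and E: "m2 * sin (a+b)^2 = m3 * sin a^2 \<and> m3 * sin a^2 = m1 * sin b^2 \<and> m1 * sin b^2 = m2 * sin (a+b)^2"
  shows "K0 m1 m2 m3 > 0 \<and> cos a = cA m1 m2 m3 \<and> cos b = cB m1 m2 m3"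
proof -
  have s: "sin a > 0" "sin b > 0" "sin (a+b) < 0" using sins[OF U] by auto
  define K where "K = m1 * sin b^2"
  have Kp: "K > 0" using s m by (simp add: K_def)
  note E1 = conjunct1[OF E] and E2 = conjunct1[OF conjunct2[OF E]]
  have A: "sin a^2 = K/m3" using E2 m unfolding K_def by (simp add: field_simps)
  have B: "sin b^2 = K/m1" using m by (simp add: K_def field_simps)
  have C: "sin (a+b)^2 = K/m2" using E1 E2 m unfolding K_def by (simp add: field_simps)
  have KK: "K = K0 m1 m2 m3" unfolding K0_def
    by (rule alg1[OF m Kp T1[of a b] A B C])
  have sa: "sA m1 m2 m3 = sin a" unfolding sA_def KK[symmetric] A[symmetric] using s by simp
  have sb: "sB m1 m2 m3 = sin b" unfolding sB_def KK[symmetric] B[symmetric] using s by simp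
  have sc: "sC m1 m2 m3 = - sin (a+b)" unfolding sC_def KK[symmetric] C[symmetric] using s by simp
  have ca: "cos a = cA m1 m2 m3"
  proof -
    have "sin a^2 = sin b^2 + sin (a+b)^2 - 2 * sin b * sin (a+b) * cos a" by (rule T3)
    then show ?thesis unfolding cA_def sa sb sc using s by (simp add: field_simps)
  qed
  have cb: "cos b = cB m1 m2 m3"
  proof -
    have "sin b^2 = sin (a+b)^2 + sin a^2 - 2 * sin (a+b) * sin a * cos b" by (rule T2)
    then show ?thesis unfolding cB_def sa sb sc using s by (simp add: field_simps)
  qed
  show ?thesis using Kp KK ca cb by simp
qed

lemma suf:
  assumes m: "m1 > 0" "m2 > 0" "m3 > 0" "m1 + m2 + m3 = 1" and Kp: "K0 m1 m2 m3 > 0"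
  defines "a \<equiv> arccos (cA m1 m2 m3)" and "b \<equiv> arccos (cB m1 m2 m3)"
  shows "(a, b) \<in> acuteU \<and> m2 * sin (a+b)^2 = m3 * sin a^2 \<and> m3 * sin a^2 = m1 * sin b^2 \<and> m1 * sin b^2 = m2 * sin (a+b)^2"
proof -
  define K where "K = K0 m1 m2 m3"
  define x where "x = K/m3"
  define y where "y = K/m1"
  define z where "z = K/m2"
  have xyz: "x > 0" "y > 0" "z > 0" using Kp m by (auto simp: x_def y_def z_def K_def)
  have H: "2*(x*y+y*z+x*z) - (x^2+y^2+z^2) = 4*x*y*z"
    by (rule alg2[OF m K0_def[of m1 m2 m3, folded K_def] x_def y_def z_def])
  have sa: "sA m1 m2 m3 = sqrt x" and sb: "sB m1 m2 m3 = sqrt y" and sc: "sC m1 m2 m3 = sqrt z"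
    by (simp_all add: sA_def sB_def sC_def x_def y_def z_def K_def)
  have ca: "cA m1 m2 m3 = (y + z - x) / (- 2 * sqrt y * sqrt z)" unfolding cA_def sa sb sc using xyz by simp
  have cb: "cB m1 m2 m3 = (z + x - y) / (- 2 * sqrt z * sqrt x)" unfolding cB_def sa sb sc using xyz by simp
  have ca2: "1 - cA m1 m2 m3 ^2 = x"
  proof -
    have "cA m1 m2 m3 ^2 = (y + z - x)^2 / (4 * y * z)" unfolding ca using xyz
      by (simp add: power_divide power_mult_distrib)
    also have "\<dots> = 1 - x" using xyz H by (simp add: field_simps power2_eq_square)
    finally show ?thesis by simp
  qed
  have cb2: "1 - cB m1 m2 m3 ^2 = y"
  proof -
    have "cB m1 m2 m3 ^2 = (z + x - y)^2 / (4 * z * x)" unfolding cb using xyz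
      by (simp add: power_divide power_mult_distrib)
    also have "\<dots> = 1 - y" using xyz H by (simp add: field_simps power2_eq_square)
    finally show ?thesis by simp
  qed
  have ba: "-1 < cA m1 m2 m3" "cA m1 m2 m3 < 1"
  proof -
    have "(cA m1 m2 m3)^2 < 1" using ca2 xyz by simp
    then have "\<bar>cA m1 m2 m3\<bar> < 1" by (simp add: abs_square_less_1)
    then show "-1 < cA m1 m2 m3" "cA m1 m2 m3 < 1" by auto
  qed
  have bb: "-1 < cB m1 m2 m3" "cB m1 m2 m3 < 1"
  proof -
    have "(cB m1 m2 m3)^2 < 1" using cb2 xyz by simp
    then have "\<bar>cB m1 m2 m3\<bar> < 1" by (simp add: abs_square_less_1)
    then show "-1 < cB m1 m2 m3" "cB m1 m2 m3 < 1" by auto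
  qed
  have ra: "0 < a" "a < pi" using arccos_lt_bounded[OF ba] a_def by auto
  have rb: "0 < b" "b < pi" using arccos_lt_bounded[OF bb] b_def by auto
  have sina: "sin a = sqrt x" unfolding a_def using ba ca2 by (simp add: sin_arccos)
  have sinb: "sin b = sqrt y" unfolding b_def using bb cb2 by (simp add: sin_arccos)
  have cosa: "cos a = cA m1 m2 m3" unfolding a_def using ba by simp
  have cosb: "cos b = cB m1 m2 m3" unfolding b_def using bb by simp
  have sab: "sin (a+b) = - sqrt z"
  proof -
    have "sin (a+b) = sqrt x * ((z + x - y) / (- 2 * sqrt z * sqrt x)) + (y + z - x) / (- 2 * sqrt y * sqrt z) * sqrt y"
      unfolding sin_add sina sinb cosa cosb ca cb by simp
    also have "\<dots> = - (2 * z) / (2 * sqrt z)" using xyz by (simp add: field_simps)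
    also have "\<dots> = - sqrt z" using xyz by (simp add: field_simps real_sqrt_mult[symmetric])
    finally show ?thesis .
  qed
  have "pi < a + b"
  proof (rule ccontr)
    assume "\<not> pi < a + b"
    then have "sin (a+b) \<ge> 0" using ra rb by (intro sin_ge_zero) auto
    then show False using sab xyz by simp
  qed
  then have U: "(a, b) \<in> acuteU" using ra rb by (auto simp: acuteU_def)
  show ?thesis using U xyz m unfolding sab sina sinb by (simp add: x_def y_def z_def)
qed

lemma region_iff:
  assumes m: "m1 > 0" "m2 > 0" "m3 > 0" "m1 + m2 + m3 = 1"
  shows "(m1, m2) \<in> mass_region \<longleftrightarrow> K0 m1 m2 m3 > 0"
proof -
  have m3: "1 - m1 - m2 = m3" using m by simp
  have P: "4*m1*m2*m3 > 0" using m by simp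
  have "K0 m1 m2 m3 > 0 \<longleftrightarrow> 2*m1*m2*m3 - (m1^2*m2^2 + m1^2*m3^2 + m2^2*m3^2) > 0"
    unfolding K0_def using P by (simp add: zero_less_divide_iff)
  moreover have "m1 < 1" "m2 < 1" using m by auto
  ultimately show ?thesis unfolding mass_region_def Let_def m3 using m by (simp only: mem_Collect_eq case_prod_conv m3) auto
qed

lemma afp_iff:
  assumes m: "m1 > 0" "m2 > 0" "m3 > 0"
  shows "acute_fixed_point m1 m2 m3 a b \<longleftrightarrow> (a, b) \<in> acuteU \<and>
    (m2 * sin (a+b)^2 = m3 * sin a^2 \<and> m3 * sin a^2 = m1 * sin b^2 \<and> m1 * sin b^2 = m2 * sin (a+b)^2)"
  unfolding acute_fixed_point_def using fp_iff[OF _ m] by blast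

theorem theorem1:
  fixes m1 m2 m3 :: real
  assumes "0 < m1" and "0 < m2" and "0 < m3" and "m1 + m2 + m3 = 1"
  shows "((\<exists>a b. acute_fixed_point m1 m2 m3 a b) \<longleftrightarrow> (m1, m2) \<in> mass_region)
    \<and> (\<forall>a b a' b'. acute_fixed_point m1 m2 m3 a b \<and> acute_fixed_point m1 m2 m3 a' b'
          \<longrightarrow> a = a' \<and> b = b')"
proof (intro conjI allI impI iffI)
  note m = assms
  show "(m1, m2) \<in> mass_region" if ex: "\<exists>a b. acute_fixed_point m1 m2 m3 a b"
  proof -
    obtain a b where ab: "acute_fixed_point m1 m2 m3 a b" using ex by blast
    note X = iffD1[OF afp_iff[OF m(1-3)] ab]
    have "K0 m1 m2 m3 > 0" using nec[OF m conjunct1[OF X] conjunct2[OF X]] by (rule conjunct1)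
    then show ?thesis using region_iff[OF m] by simp
  qed
  show "\<exists>a b. acute_fixed_point m1 m2 m3 a b" if "(m1, m2) \<in> mass_region"
  proof -
    have "K0 m1 m2 m3 > 0" using that region_iff[OF m] by simp
    from suf[OF m this] show ?thesis using iffD2[OF afp_iff[OF m(1-3)]] by blast
  qed
  fix a b a' b'
  assume h: "acute_fixed_point m1 m2 m3 a b \<and> acute_fixed_point m1 m2 m3 a' b'"
  note X1 = iffD1[OF afp_iff[OF m(1-3)] conjunct1[OF h]]
  note X2 = iffD1[OF afp_iff[OF m(1-3)] conjunct2[OF h]]
  note U = conjunct1[OF X1] conjunct1[OF X2]
  note N1 = nec[OF m conjunct1[OF X1] conjunct2[OF X1]]
  note N2 = nec[OF m conjunct1[OF X2] conjunct2[OF X2]]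
  have c: "cos a = cos a'" "cos b = cos b'" using N1 N2 by (simp_all only: conj_assoc)
  have r: "0 < a" "a < pi" "0 < b" "b < pi" "0 < a'" "a' < pi" "0 < b'" "b' < pi"
    using U by (auto simp: acuteU_def)
  show "a = a'" using cos_inj_pi c r by auto
  show "b = b'" using cos_inj_pi c r by auto
qed


end
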